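(* Let $\Bbbk$ be a field, $n\ge2$, and $R=\Bbbk[x]/\langle x^n\rangle$. The following cones in $\mathbb V$ are equal: (1) ${\operatorname{B_{\mathbb Q}}}(R)$; (2) $D=\operatorname{pos}\{\pi_d: d \text{ an } R\text{-degree sequence}\}$; (3) the cone $F$ defined as the intersection of: $\{\epsilon_{i,j}\ge0\}$ for $i\in\{0,1,2\}$, $j\in\mathbb Z$; $\{\alpha_{0,k}\ge0\}$ for $k\in\mathbb Z$; $\{\theta_k\ge0\}$ for $k\in\mathbb Z$; $\{\eta_k\ge0\}$ for $k\in\mathbb Z$; $\{\alpha_{i,k}=0\}$ for all $i\ge1$, $k\in\mathbb Z$; and $\{\eta_\infty=0\}$.
   Context: $\mathbb V$: the $\mathbb Q$-vector space of column-finite rational matrices $v=(v_{i,j})$, $i\in\mathbb N$, $j\in\mathbb Z$. For a finitely generated graded $R$-module $M$, $\beta^R(M)\in\mathbb V$ has entries $\beta^R_{i,j}(M)=\dim_\Bbbk\operatorname{Tor}_i^R(M,\Bbbk)_j$; ${\operatorname{B_{\mathbb Q}}}(R)$ is the set of finite $\mathbb Q_{\ge0}$-combinations of Betti diagrams of finitely generated graded $R$-modules; $\operatorname{pos}$ denotes finite $\mathbb Q_{\ge0}$-combinations. An $R$-degree sequence is either $(d_0,\infty,\infty,\ldots)$ with $d_0\in\mathbb Z$, or an integer sequence $(d_0,d_1,d_2,\ldots)$ with $d_0<d_1<d_0+n$ and $d_{i+2}-d_i=n$ for all $i\ge0$. For such $d$, $(\pi_d)_{i,j}=1$ if $j=d_i\ne\infty$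 and $0$ otherwise. Functionals on $v\in\mathbb V$: $\epsilon_{i,j}(v)=v_{i,j}$; $\alpha_{i,k}(v)=\epsilon_{i,k}(v)-\epsilon_{i+2,k+n}(v)$; $\theta_k(v)=\sum_{j\le k}\epsilon_{2,j}(v)-\sum_{j\le k-n+1}\epsilon_{1,j}(v)$; $\eta_k(v)=\sum_{j\le k}(\epsilon_{1,j}(v)-\epsilon_{2,j+1}(v))$; $\eta_\infty(v)=\sum_{j\in\mathbb Z}(\epsilon_{1,j}(v)-\epsilon_{2,j+1}(v))$ (all sums finite by column-finiteness). *)

theory Defs
  imports "Jordan_Normal_Form.DL_Rank" "Jordan_Normal_Form.Matrix_Kernel"
begin

text \<open>A finitely generated graded R-module M is encoded, after choosing a basis of
each graded piece, by its graded dimensions m j = dim_k M_j (finitely many nonzero)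
and the matrices X j of multiplication by x from M_j to M_(j+1), subject to x^n = 0.\<close>

type_synonym 'k grmod = "(int \<Rightarrow> nat) \<times> (int \<Rightarrow> 'k mat)"

definition gdim :: "'k grmod \<Rightarrow> int \<Rightarrow> nat" where
  "gdim M j = fst M j"

definition xmat :: "'k grmod \<Rightarrow> int \<Rightarrow> 'k mat" where
  "xmat M j = snd M j"

fun xpow :: "'k::field grmod \<Rightarrow> int \<Rightarrow> nat \<Rightarrow> 'k mat" where
  "xpow M j 0 = 1\<^sub>m (gdim M j)"
| "xpow M j (Suc r) = xmat M (j + int r) * xpow M j r"

definition fg_graded_module :: "nat \<Rightarrow> 'k::field grmod \<Rightarrow> bool" where
  "fg_graded_module n M \<longleftrightarrow>
     finite {j. gdim M j \<noteq> 0}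
   \<and> (\<forall>j. xmat M j \<in> carrier_mat (gdim M (j + 1)) (gdim M j))
   \<and> (\<forall>j. xpow M j n = 0\<^sub>m (gdim M (j + int n)) (gdim M j))"

definition img_dim :: "'k::field mat \<Rightarrow> nat" where
  "img_dim A = vec_space.rank (dim_row A) A"

text \<open>The minimal graded free resolution of k over R is
  0 <- R <-x- R(-1) <-x^(n-1)- R(-n) <-x- R(-n-1) <-x^(n-1)- R(-2n) <- ...
i.e. F_i = R(-tdeg n i) with tdeg n i = (i div 2) n + (i mod 2), and the differential
F_i -> F_(i-1) is multiplication by x^(dexp n i), dexp n i = 1 for i odd and n-1 for i even.
Tor_i(M,k) is the i-th homology of M tensor F, whose degree j part in homological
degree i is M_(j - tdeg n i).\<close>

definition tdeg :: "nat \<Rightarrow> nat \<Rightarrow> int" where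
  "tdeg n i = int ((i div 2) * n + i mod 2)"

definition dexp :: "nat \<Rightarrow> nat \<Rightarrow> nat" where
  "dexp n i = (if odd i then 1 else n - 1)"

text \<open>dim_k Tor_i^R(M,k)_j = dim ker(d_i in degree j) - dim im(d_(i+1) in degree j)\<close>
definition betti_num :: "nat \<Rightarrow> 'k::field grmod \<Rightarrow> nat \<Rightarrow> int \<Rightarrow> nat" where
  "betti_num n M i j =
     (let a = j - tdeg n i;
          e = dexp n (Suc i);
          kd = (if i = 0 then gdim M a else kernel_dim (xpow M a (dexp n i)))
      in kd - img_dim (xpow M (a - int e) e))"

definition betti :: "nat \<Rightarrow> 'k::field grmod \<Rightarrow> nat \<Rightarrow> int \<Rightarrow> rat" where
  "betti n M = (\<lambda>i j. rat_of_nat (betti_num n M i j))"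

type_synonym vmat = "nat \<Rightarrow> int \<Rightarrow> rat"

definition Vspace :: "vmat set" where
  "Vspace = {v. \<forall>i. finite {j. v i j \<noteq> 0}}"

definition pos :: "vmat set \<Rightarrow> vmat set" where
  "pos S = {v. \<exists>A c. finite A \<and> A \<subseteq> S \<and> (\<forall>s\<in>A. c s \<ge> (0::rat)) \<and>
                    v = (\<lambda>i j. \<Sum>s\<in>A. c s * s i j)}"

definition BQ :: "'k::field itself \<Rightarrow> nat \<Rightarrow> vmat set" where
  "BQ (_::'k itself) n = pos {betti n (M :: 'k grmod) | M. fg_graded_module n M}"

text \<open>R-degree sequences; None stands for infinity\<close>
definition degree_seq :: "nat \<Rightarrow> (nat \<Rightarrow> int option) \<Rightarrow> bool" where
  "degree_seq n d \<longleftrightarrow>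
     (\<exists>d0. d 0 = Some d0 \<and> (\<forall>i\<ge>1. d i = None))
   \<or> (\<exists>e. (\<forall>i. d i = Some (e i)) \<and> e 0 < e 1 \<and> e 1 < e 0 + int n
          \<and> (\<forall>i. e (i + 2) - e i = int n))"

definition pi_seq :: "(nat \<Rightarrow> int option) \<Rightarrow> vmat" where
  "pi_seq d = (\<lambda>i j. if d i = Some j then 1 else 0)"

definition Dcone :: "nat \<Rightarrow> vmat set" where
  "Dcone n = pos {pi_seq d | d. degree_seq n d}"

definition rsum :: "vmat \<Rightarrow> nat \<Rightarrow> int set \<Rightarrow> rat" where
  "rsum v i S = (\<Sum>j\<in>{j\<in>S. v i j \<noteq> 0}. v i j)"

definition alpha :: "nat \<Rightarrow> nat \<Rightarrow> int \<Rightarrow> vmat \<Rightarrow> rat" where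
  "alpha n i k v = v i k - v (i + 2) (k + int n)"

definition theta :: "nat \<Rightarrow> int \<Rightarrow> vmat \<Rightarrow> rat" where
  "theta n k v = rsum v 2 {..k} - rsum v 1 {..k - int n + 1}"

definition eta :: "int \<Rightarrow> vmat \<Rightarrow> rat" where
  "eta k v = rsum v 1 {..k} - rsum v 2 {..k + 1}"

definition eta_inf :: "vmat \<Rightarrow> rat" where
  "eta_inf v = rsum v 1 UNIV - rsum v 2 UNIV"

definition Fcone :: "nat \<Rightarrow> vmat set" where
  "Fcone n = {v \<in> Vspace.
      (\<forall>i\<le>2. \<forall>j. v i j \<ge> 0)
    \<and> (\<forall>k. alpha n 0 k v \<ge> 0)
    \<and> (\<forall>k. theta n k v \<ge> 0)
    \<and> (\<forall>k. eta k v \<ge> 0)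
    \<and> (\<forall>i\<ge>1. \<forall>k. alpha n i k v = 0)
    \<and> eta_inf v = 0}"

end

theory Submission
  imports Defs
begin

context vec_space begin

lemma subspace_fin_dim:
  assumes W: "subspace class_ring W V"
  shows "vectorspace.fin_dim class_ring (vs W)"
proof -
  interpret VW: vectorspace class_ring "vs W" using subspace_is_vs[OF W] .
  have sub: "submodule class_ring W V" using W by (simp add: subspace_def)
  have bound: "finite S \<and> card S \<le> n" if "S \<subseteq> carrier (vs W) \<and> VW.lin_indpt S" for S
  proof -
    from that have SW: "S \<subseteq> W" and li: "VW.lin_indpt S" by auto
    have WV: "W \<subseteq> carrier V" using sub by (simp add: submodule_def)
    have "lin_indpt S" using li span_li_not_depend(2)[OF SW sub] by simp
    moreover have "S \<subseteq> carrier V" using SW WV by auto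
    ultimately show ?thesis using li_le_dim[OF fin_dim] dim_is_n by auto
  qed
  have "\<exists>A. finite A \<and> maximal A (\<lambda>S. S \<subseteq> carrier (vs W) \<and> VW.lin_indpt S)"
    by (rule maximal_exists[OF bound, where B="{}"]) (auto simp: VW.lin_dep_def)
  then obtain A where A: "finite A" "maximal A (\<lambda>S. S \<subseteq> carrier (vs W) \<and> VW.lin_indpt S)" by blast
  have "VW.gen_set A" by (rule VW.max_li_is_gen[OF A(2)])
  moreover have "A \<subseteq> carrier (vs W)" using A(2) by (simp add: maximal_def)
  ultimately show ?thesis using A(1) unfolding VW.fin_dim_def by blast
qed

end

definition sdim :: "nat \<Rightarrow> 'a::field vec set \<Rightarrow> nat" where
  "sdim m S = vectorspace.dim class_ring ((module_vec TYPE('a) m)\<lparr>carrier := S\<rparr>)"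

definition ssub :: "nat \<Rightarrow> 'a::field vec set \<Rightarrow> bool" where
  "ssub m S = subspace class_ring S (module_vec TYPE('a) m)"

lemma ssubI:
  fixes S :: "'a::field vec set"
  assumes "S \<subseteq> carrier_vec m" "0\<^sub>v m \<in> S"
    "\<And>v w. v \<in> S \<Longrightarrow> w \<in> S \<Longrightarrow> v + w \<in> S"
    "\<And>c v. v \<in> S \<Longrightarrow> c \<cdot>\<^sub>v v \<in> S"
  shows "ssub m S"
proof -
  interpret V: vec_space "TYPE('a)" m .
  show ?thesis unfolding ssub_def subspace_def
    using assms V.vectorspace_axioms
    by (auto simp: submodule_def V.module_axioms)
qed

lemma rank_nullity_sub:
  fixes B :: "'a::field mat"
  assumes B: "B \<in> carrier_mat p m" and W: "ssub m W"
  shows "sdim m W = sdim p ((\<lambda>v. B *\<^sub>v v) ` W) + sdim m (W \<inter> mat_kernel B)"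
proof -
  interpret V: vec_space "TYPE('a)" m .
  interpret P: vec_space "TYPE('a)" p .
  have Ws: "subspace class_ring W V.V" using W by (simp add: ssub_def)
  interpret VW: vectorspace class_ring "V.vs W" using V.subspace_is_vs[OF Ws] .
  have Wc: "W \<subseteq> carrier_vec m" using Ws by (auto simp: subspace_def submodule_def)
  interpret L: linear_map class_ring "V.vs W" "P.V" "\<lambda>v. B *\<^sub>v v"
  proof (unfold_locales)
    show "(\<lambda>v. B *\<^sub>v v) \<in> LinearCombinations.module_hom class_ring (V.vs W) P.V"
      unfolding LinearCombinations.module_hom_def using Wc B
      by (auto simp: mult_mat_vec intro!: mult_add_distrib_mat_vec[OF B] dest: subsetD)
  qed
  have fd: "VW.fin_dim" using V.subspace_fin_dim[OF Ws] .
  have "vectorspace.dim class_ring (P.vs L.imT) + vectorspace.dim class_ring ((V.vs W)\<lparr>carrier := L.kerT\<rparr>) = VW.dim"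
    by (rule L.rank_nullity[OF fd])
  moreover have "L.imT = (\<lambda>v. B *\<^sub>v v) ` W" by (simp add: L.im_def)
  moreover have "L.kerT = W \<inter> mat_kernel B"
    using Wc B by (auto simp: L.ker_def mat_kernel_def)
  ultimately show ?thesis unfolding sdim_def by simp
qed


lemma sdim_mono:
  fixes X :: "'a::field vec set"
  assumes X: "ssub m X" and W: "ssub m W" and XW: "X \<subseteq> W"
  shows "sdim m X \<le> sdim m W"
proof -
  interpret V: vec_space "TYPE('a)" m .
  have Ws: "subspace class_ring W V.V" and Xs: "subspace class_ring X V.V"
    using W X by (simp_all add: ssub_def)
  interpret VW: vectorspace class_ring "V.vs W" using V.subspace_is_vs[OF Ws] .
  have "subspace class_ring X (V.vs W)" by (rule V.nested_subspaces[OF Ws Xs XW])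
  from VW.subspace_dim[OF this V.subspace_fin_dim[OF Ws]] V.subspace_fin_dim[OF Xs]
  show ?thesis unfolding sdim_def by simp
qed

definition imgs :: "'a::field mat \<Rightarrow> 'a vec set" where
  "imgs A = (\<lambda>x. A *\<^sub>v x) ` carrier_vec (dim_col A)"

lemma ssub_imgs: assumes A: "A \<in> carrier_mat nr nc" shows "ssub nr (imgs A)"
proof (rule ssubI)
  show "imgs A \<subseteq> carrier_vec nr" using A by (auto simp: imgs_def)
  show "0\<^sub>v nr \<in> imgs A" unfolding imgs_def using A
    by (intro image_eqI[of _ _ "0\<^sub>v nc"]) auto
  fix v w assume "v \<in> imgs A" "w \<in> imgs A"
  then obtain x y where x: "x \<in> carrier_vec nc" "v = A *\<^sub>v x" and y: "y \<in> carrier_vec nc" "w = A *\<^sub>v y"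
    using A by (auto simp: imgs_def)
  show "v + w \<in> imgs A" unfolding imgs_def using A x y
    by (intro image_eqI[of _ _ "x + y"]) (auto simp: mult_add_distrib_mat_vec)
next
  fix c v assume "v \<in> imgs A"
  then obtain x where x: "x \<in> carrier_vec nc" "v = A *\<^sub>v x"
    using A by (auto simp: imgs_def)
  show "c \<cdot>\<^sub>v v \<in> imgs A" unfolding imgs_def using A x
    by (intro image_eqI[of _ _ "c \<cdot>\<^sub>v x"]) (auto simp: mult_mat_vec)
qed

lemma ssub_kernel: assumes A: "A \<in> carrier_mat nr nc" shows "ssub nc (mat_kernel A)"
  by (rule ssubI) (use A in \<open>auto simp: mat_kernel_def mult_add_distrib_mat_vec mult_mat_vec\<close>)

lemma ssub_Int: assumes "ssub m X" "ssub m Y" shows "ssub m (X \<inter> Y)"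
proof -
  interpret V: vec_space "TYPE('a)" m .
  have "submodule class_ring X V.V" "submodule class_ring Y V.V" using assms by (auto simp: ssub_def subspace_def)
  then show ?thesis by (intro ssubI) (auto simp: submodule_def)
qed

lemma ssub_carrier: "ssub m (carrier_vec m :: 'a::field vec set)"
  by (rule ssubI) auto

lemma img_dim_sdim: assumes A: "A \<in> carrier_mat nr nc" shows "img_dim A = sdim nr (imgs A)"
proof -
  interpret V: vec_space "TYPE('a)" nr .
  have "V.col_space A = imgs A" using V.col_space_eq[OF A] A by (auto simp: imgs_def)
  moreover have "V.rank A = vectorspace.dim class_ring (V.vs (V.col_space A))"
    by (simp add: V.rank_def V.col_space_def)
  ultimately show ?thesis unfolding img_dim_def sdim_def using A by simp
qed

lemma kernel_dim_sdim: assumes A: "A \<in> carrier_mat nr nc" shows "kernel_dim A = sdim nc (mat_kernel A)"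
proof -
  interpret K: kernel nr nc A using A by unfold_locales
  show ?thesis unfolding sdim_def by simp
qed

lemma imgs_mult: assumes A: "A \<in> carrier_mat m q" and B: "B \<in> carrier_mat p m"
  shows "(\<lambda>v. B *\<^sub>v v) ` imgs A = imgs (B * A)"
  using A B by (auto simp: imgs_def image_image assoc_mult_mat_vec)

lemma carrier_upd_self: "(r::('a,'b) partial_object_scheme)\<lparr>carrier := carrier r\<rparr> = r" by simp

lemma rank_nullity_mat: fixes A :: "'a::field mat" assumes A: "A \<in> carrier_mat nr nc"
  shows "img_dim A + kernel_dim A = nc"
proof -
  have "sdim nc (carrier_vec nc :: 'a vec set) = nc"
  proof -
    interpret V: vec_space "TYPE('a)" nc .
    have e: "module_vec TYPE('a) nc\<lparr>carrier := carrier_vec nc\<rparr> = module_vec TYPE('a) nc"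
      using carrier_upd_self[of "module_vec TYPE('a) nc"] by (simp only: V.cV)
    show ?thesis unfolding sdim_def e using V.dim_is_n by simp
  qed
  moreover have "sdim nc (carrier_vec nc :: 'a vec set) = sdim nr (imgs A) + sdim nc (carrier_vec nc \<inter> mat_kernel A)"
    using rank_nullity_sub[OF A ssub_carrier] A by (simp add: imgs_def)
  moreover have "carrier_vec nc \<inter> mat_kernel A = mat_kernel A" using A by (auto simp: mat_kernel_def)
  ultimately show ?thesis using img_dim_sdim[OF A] kernel_dim_sdim[OF A] by simp
qed

lemma sylvester: assumes A: "A \<in> carrier_mat m q" and B: "B \<in> carrier_mat p m"
  shows "img_dim A \<le> img_dim (B * A) + kernel_dim B"
proof -
  have BA: "B * A \<in> carrier_mat p q" using A B by simp
  have "sdim m (imgs A) = sdim p (imgs (B*A)) + sdim m (imgs A \<inter> mat_kernel B)"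
    using rank_nullity_sub[OF B ssub_imgs[OF A]] imgs_mult[OF A B] by simp
  moreover have "sdim m (imgs A \<inter> mat_kernel B) \<le> sdim m (mat_kernel B)"
    by (rule sdim_mono) (auto intro: ssub_Int ssub_imgs[OF A] ssub_kernel[OF B])
  ultimately show ?thesis using img_dim_sdim[OF A] img_dim_sdim[OF BA] kernel_dim_sdim[OF B] by simp
qed

lemma frobenius: assumes A: "A \<in> carrier_mat m q" and B: "B \<in> carrier_mat p m"
  and C: "C \<in> carrier_mat q r"
  shows "img_dim (B * A) + img_dim (A * C) \<le> img_dim A + img_dim (B * A * C)"
proof -
  have BA: "B * A \<in> carrier_mat p q" and AC: "A * C \<in> carrier_mat m r"
    and BAC: "B * A * C \<in> carrier_mat p r" using A B C by auto
  have e: "B * (A * C) = B * A * C" using A B C by (simp add: assoc_mult_mat)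
  have 1: "sdim m (imgs A) = sdim p (imgs (B*A)) + sdim m (imgs A \<inter> mat_kernel B)"
    using rank_nullity_sub[OF B ssub_imgs[OF A]] imgs_mult[OF A B] by simp
  have 2: "sdim m (imgs (A*C)) = sdim p (imgs (B*A*C)) + sdim m (imgs (A*C) \<inter> mat_kernel B)"
    using rank_nullity_sub[OF B ssub_imgs[OF AC]] imgs_mult[OF AC B] e by simp
  have sub: "imgs (A*C) \<subseteq> imgs A"
  proof -
    have "imgs (A*C) = (\<lambda>v. A *\<^sub>v v) ` imgs C" using imgs_mult[OF C A] by simp
    also have "\<dots> \<subseteq> imgs A" using A C by (auto simp: imgs_def)
    finally show ?thesis .
  qed
  have "sdim m (imgs (A*C) \<inter> mat_kernel B) \<le> sdim m (imgs A \<inter> mat_kernel B)"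
    by (rule sdim_mono) (use sub in \<open>auto intro: ssub_Int ssub_imgs[OF A] ssub_imgs[OF AC] ssub_kernel[OF B]\<close>)
  with 1 2 show ?thesis using img_dim_sdim[OF A] img_dim_sdim[OF BA] img_dim_sdim[OF AC] img_dim_sdim[OF BAC] by simp
qed

lemma img_dim_zero: "img_dim (0\<^sub>m nr nc :: 'a::field mat) = 0"
proof -
  interpret V: vec_space "TYPE('a)" nr .
  show ?thesis unfolding img_dim_def using V.rank_0I by simp
qed

lemma img_dim_one: "img_dim (1\<^sub>m k :: 'a::field mat) = k"
  using rank_nullity_mat[of "1\<^sub>m k :: 'a mat" k k] kernel_one_mat(1)[of k, where 'a='a]
  unfolding kernel_dim_def by simp


definition supp :: "vmat \<Rightarrow> nat \<Rightarrow> int set" where "supp v i = {j. v i j \<noteq> 0}"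

lemma rsum_fin:
  assumes "finite F" "supp v i \<subseteq> F"
  shows "rsum v i S = (\<Sum>j\<in>S \<inter> F. v i j)"
  unfolding rsum_def
  by (rule sum.mono_neutral_left) (use assms in \<open>auto simp: supp_def\<close>)

lemma rsum_step:
  assumes "finite (supp v i)"
  shows "rsum v i {..k} = rsum v i {..k - 1} + v i k"
proof -
  let ?F = "insert k (supp v i)"
  have e: "{..k} \<inter> ?F = insert k ({..k - 1} \<inter> ?F)" by auto
  have "rsum v i {..k} = (\<Sum>j\<in>{..k} \<inter> ?F. v i j)" by (rule rsum_fin) (use assms in auto)
  also have "\<dots> = v i k + (\<Sum>j\<in>{..k - 1} \<inter> ?F. v i j)" unfolding e
    by (rule sum.insert) (use assms in auto)
  also have "(\<Sum>j\<in>{..k - 1} \<inter> ?F. v i j) = rsum v i {..k - 1}" by (rule rsum_fin[symmetric]) (use assms in auto)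
  finally show ?thesis by simp
qed

lemma rsum_zero: "(\<And>j. j \<in> S \<Longrightarrow> v i j = 0) \<Longrightarrow> rsum v i S = 0"
  unfolding rsum_def by (rule sum.neutral) auto

lemma rsum_UNIV: "(\<And>j. j > k \<Longrightarrow> v i j = 0) \<Longrightarrow> rsum v i UNIV = rsum v i {..k}"
  unfolding rsum_def by (rule sum.cong) (auto simp: not_le[symmetric])

lemma rsum_lin:
  assumes "finite (supp v i)" "finite (supp w i)"
  shows "rsum (\<lambda>i j. a * v i j + b * w i j) i S = a * rsum v i S + b * rsum w i S"
proof -
  let ?F = "supp v i \<union> supp w i"
  have "rsum (\<lambda>i j. a * v i j + b * w i j) i S = (\<Sum>j\<in>S \<inter> ?F. a * v i j + b * w i j)"
    by (rule rsum_fin) (use assms in \<open>auto simp: supp_def\<close>)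
  also have "\<dots> = a * (\<Sum>j\<in>S \<inter> ?F. v i j) + b * (\<Sum>j\<in>S \<inter> ?F. w i j)"
    by (simp add: sum.distrib sum_distrib_left)
  also have "(\<Sum>j\<in>S \<inter> ?F. v i j) = rsum v i S" by (rule rsum_fin[symmetric]) (use assms in auto)
  also have "(\<Sum>j\<in>S \<inter> ?F. w i j) = rsum w i S" by (rule rsum_fin[symmetric]) (use assms in auto)
  finally show ?thesis .
qed

lemma rsum_nonneg: "(\<And>j. v i j \<ge> 0) \<Longrightarrow> rsum v i S \<ge> 0"
  unfolding rsum_def by (rule sum_nonneg) auto

lemma rsum_ge:
  assumes "\<And>j. v i j \<ge> 0" "finite (supp v i)" "j0 \<in> S"
  shows "rsum v i S \<ge> v i j0"
proof (cases "v i j0 = 0")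
  case True then show ?thesis using rsum_nonneg[of v i S] assms by simp
next
  case False
  have fin: "finite {j \<in> S. v i j \<noteq> 0}" using assms(2) by (rule rev_finite_subset) (auto simp: supp_def)
  have "v i j0 = (\<Sum>j\<in>{j0}. v i j)" by simp
  also have "\<dots> \<le> rsum v i S" unfolding rsum_def
    by (rule sum_mono2[OF fin]) (use False assms in auto)
  finally show ?thesis .
qed

lemma rsum_mono:
  assumes "\<And>j. v i j \<ge> 0" "finite (supp v i)" "S \<subseteq> T"
  shows "rsum v i S \<le> rsum v i T"
proof -
  have fin: "finite {j \<in> T. v i j \<noteq> 0}" using assms(2) by (rule rev_finite_subset) (auto simp: supp_def)
  show ?thesis unfolding rsum_def by (rule sum_mono2[OF fin]) (use assms in auto)
qed

lemma rsum_pos: "rsum v i S \<noteq> 0 \<Longrightarrow> \<exists>j\<in>S. v i j \<noteq> 0"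
  using rsum_zero by blast

lemma int_const:
  fixes f :: "int \<Rightarrow> 'a"
  assumes "\<And>k. f k = f (k - 1)"
  shows "f a = f b"
proof -
  have "f i = f b" for i
  proof (induction i rule: int_induct[where k=b])
    case base then show ?case by simp
  next
    case (step1 i) then show ?case using assms[of "i+1"] by simp
  next
    case (step2 i) then show ?case using assms[of i] by simp
  qed
  then show ?thesis .
qed

lemma sum_Icc_lo: "(a::int) \<le> b \<Longrightarrow> sum f {a..b} = f a + sum f {a+1..b}"
proof -
  assume "a \<le> b"
  then have "{a..b} = insert a {a+1..b}" by auto
  then show ?thesis by simp
qed

lemma sum_Icc_hi: "(a::int) \<le> b \<Longrightarrow> sum f {a..b} = sum f {a..b-1} + f b"
proof -
  assume "a \<le> b"
  then have "{a..b} = insert b {a..b-1}" by auto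
  then show ?thesis by (simp add: add.commute)
qed


lemma xpow_carrier:
  assumes fg: "fg_graded_module n M"
  shows "xpow M j r \<in> carrier_mat (gdim M (j + int r)) (gdim M j)"
proof (induction r)
  case 0 then show ?case by simp
next
  case (Suc r)
  have X: "xmat M (j + int r) \<in> carrier_mat (gdim M (j + int r + 1)) (gdim M (j + int r))"
    using fg by (simp add: fg_graded_module_def)
  show ?case using mult_carrier_mat[OF X Suc.IH] by (simp add: ac_simps)
qed

lemma xpow_add:
  assumes fg: "fg_graded_module n M"
  shows "xpow M j (r + s) = xpow M (j + int r) s * xpow M j r"
proof (induction s)
  case 0 then show ?case using xpow_carrier[OF fg, of j r] by simp
next
  case (Suc s)
  have X: "xmat M (j + int (r + s)) \<in> carrier_mat (gdim M (j + int (r+s) + 1)) (gdim M (j + int (r+s)))"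
    using fg by (simp add: fg_graded_module_def)
  have A: "xpow M (j + int r) s \<in> carrier_mat (gdim M (j + int (r+s))) (gdim M (j + int r))"
    using xpow_carrier[OF fg, of "j + int r" s] by (simp add: add.assoc)
  have B: "xpow M j r \<in> carrier_mat (gdim M (j + int r)) (gdim M j)" using xpow_carrier[OF fg] .
  have "xpow M j (r + Suc s) = xmat M (j + int (r + s)) * (xpow M (j + int r) s * xpow M j r)"
    using Suc.IH by simp
  also have "\<dots> = (xmat M (j + int (r + s)) * xpow M (j + int r) s) * xpow M j r"
    using assoc_mult_mat[OF X A B] by simp
  also have "xmat M (j + int (r + s)) * xpow M (j + int r) s = xpow M (j + int r) (Suc s)"
    by (simp add: add.assoc)
  finally show ?case .
qed

locale gmod =
  fixes n :: nat and M :: "'k::field grmod"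
  assumes fg: "fg_graded_module n M" and n2: "n \<ge> 2"
begin

definition rk :: "nat \<Rightarrow> int \<Rightarrow> nat" where "rk r j = img_dim (xpow M j r)"
definition kd :: "nat \<Rightarrow> int \<Rightarrow> nat" where "kd r j = kernel_dim (xpow M j r)"

lemma rk_kd: "rk r j + kd r j = gdim M j"
  unfolding rk_def kd_def by (rule rank_nullity_mat[OF xpow_carrier[OF fg]])

lemma rk_le: "rk r j \<le> gdim M j" using rk_kd[of r j] by simp
lemma kd_le: "kd r j \<le> gdim M j" using rk_kd[of r j] by simp

lemma rk0: "rk 0 j = gdim M j" unfolding rk_def by (simp add: img_dim_one)

lemma rkn: "rk n j = 0"
  using fg unfolding rk_def fg_graded_module_def by (simp add: img_dim_zero)

lemma rk_ge: "r \<ge> n \<Longrightarrow> rk r j = 0"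
proof -
  assume "r \<ge> n"
  then obtain s where r: "r = n + s" using le_Suc_ex by blast
  have A: "xpow M j n \<in> carrier_mat (gdim M (j + int n)) (gdim M j)" using xpow_carrier[OF fg] .
  have B: "xpow M (j + int n) s \<in> carrier_mat (gdim M (j + int n + int s)) (gdim M (j + int n))"
    using xpow_carrier[OF fg] by simp
  have "xpow M j r = xpow M (j + int n) s * 0\<^sub>m (gdim M (j + int n)) (gdim M j)"
    using xpow_add[OF fg, of j n s] fg r unfolding fg_graded_module_def by simp
  also have "\<dots> = 0\<^sub>m (gdim M (j + int n + int s)) (gdim M j)" using B by simp
  finally show ?thesis unfolding rk_def by (simp add: img_dim_zero)
qed

lemma sylv: "rk r j \<le> rk (r + s) j + kd s (j + int r)"
  unfolding rk_def kd_def xpow_add[OF fg]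
  by (rule sylvester[OF xpow_carrier[OF fg] xpow_carrier[OF fg]])

lemma frob: "rk (r + s) j + rk (r + 1) (j - 1) \<le> rk r j + rk (r + s + 1) (j - 1)"
proof -
  have A: "xpow M j r \<in> carrier_mat (gdim M (j + int r)) (gdim M j)" using xpow_carrier[OF fg] .
  have B: "xpow M (j + int r) s \<in> carrier_mat (gdim M (j + int r + int s)) (gdim M (j + int r))"
    using xpow_carrier[OF fg] .
  have C: "xpow M (j - 1) 1 \<in> carrier_mat (gdim M j) (gdim M (j - 1))"
    using xpow_carrier[OF fg, of "j - 1" 1] by simp
  have e1: "xpow M (j + int r) s * xpow M j r = xpow M j (r + s)" using xpow_add[OF fg] by simp
  have e2: "xpow M j r * xpow M (j - 1) 1 = xpow M (j - 1) (r + 1)"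
    using xpow_add[OF fg, of "j - 1" 1 r] by (simp add: add.commute)
  have e3: "xpow M j (r + s) * xpow M (j - 1) 1 = xpow M (j - 1) (r + s + 1)"
    using xpow_add[OF fg, of "j - 1" 1 "r + s"] by (simp add: add.commute)
  show ?thesis using frobenius[OF A B C] unfolding rk_def e1 e2 e3 by simp
qed


lemma rk_le_rows: "rk r j \<le> gdim M (j + int r)"
proof -
  have A: "xpow M j r \<in> carrier_mat (gdim M (j + int r)) (gdim M j)" using xpow_carrier[OF fg] .
  have "sdim (gdim M (j + int r)) (imgs (xpow M j r)) \<le> sdim (gdim M (j + int r)) (carrier_vec (gdim M (j + int r)) :: 'k vec set)"
    by (rule sdim_mono[OF ssub_imgs[OF A] ssub_carrier]) (use A in \<open>auto simp: imgs_def\<close>)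
  also have "\<dots> = gdim M (j + int r)"
  proof -
    let ?N = "gdim M (j + int r)"
    have "imgs (1\<^sub>m ?N :: 'k mat) = carrier_vec ?N"
      by (auto simp: imgs_def intro!: image_eqI)
    then show ?thesis using img_dim_sdim[OF one_carrier_mat[of ?N, where 'a='k]] img_dim_one[where 'a='k] by simp
  qed
  finally show ?thesis unfolding rk_def img_dim_sdim[OF A] .
qed

lemma tdeg0: "tdeg n 0 = 0" and tdeg1: "tdeg n 1 = 1" and tdeg2: "tdeg n 2 = int n"
  by (auto simp: tdeg_def)

lemma betti_0: "betti n M 0 j = of_nat (gdim M j) - of_nat (rk 1 (j - 1))"
proof -
  have "rk 1 (j - 1) \<le> gdim M j" using rk_le_rows[of 1 "j - 1"] by simp
  then show ?thesis unfolding betti_def betti_num_def by (simp add: tdeg0 dexp_def rk_def of_nat_diff)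
qed

lemma betti_1: "betti n M 1 j = of_nat (gdim M (j - 1)) - of_nat (rk 1 (j - 1)) - of_nat (rk (n - 1) (j - int n))"
proof -
  have e: "j - int n + int (n - 1) = j - 1" using n2 by simp
  have "rk (n - 1) (j - int n) \<le> rk (n - 1 + 1) (j - int n) + kd 1 (j - int n + int (n - 1))" by (rule sylv)
  then have le: "rk (n - 1) (j - int n) \<le> kd 1 (j - 1)" using n2 rkn e by simp
  have e2: "j - 1 - int (n - 1) = j - int n" using n2 by simp
  have "betti_num n M 1 j = kd 1 (j - 1) - rk (n - 1) (j - int n)"
    unfolding betti_num_def Let_def tdeg1 using n2 by (simp add: dexp_def kd_def rk_def e2)
  then show ?thesis unfolding betti_def using le rk_kd[of 1 "j - 1"]
    by (simp add: of_nat_diff algebra_simps flip: of_nat_add)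
qed

lemma betti_2: "betti n M 2 j = of_nat (gdim M (j - int n)) - of_nat (rk (n - 1) (j - int n)) - of_nat (rk 1 (j - int n - 1))"
proof -
  have "rk 1 (j - int n - 1) \<le> rk (1 + (n - 1)) (j - int n - 1) + kd (n - 1) (j - int n - 1 + int 1)" by (rule sylv)
  then have le: "rk 1 (j - int n - 1) \<le> kd (n - 1) (j - int n)" using n2 rkn by simp
  have d: "dexp n 2 = n - 1" "dexp n (Suc 2) = 1" by (auto simp: dexp_def)
  have "betti_num n M 2 j = kd (n - 1) (j - int n) - rk 1 (j - int n - 1)"
    unfolding betti_num_def Let_def tdeg2 d using n2 by (simp add: kd_def rk_def del: xpow.simps)
  then show ?thesis unfolding betti_def using le rk_kd[of "n - 1" "j - int n"]
    by (simp add: of_nat_diff algebra_simps flip: of_nat_add)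
qed

lemma betti_supp: "betti n M i j \<noteq> 0 \<Longrightarrow> gdim M (j - tdeg n i) \<noteq> 0"
proof -
  assume h: "betti n M i j \<noteq> 0"
  have "betti_num n M i j \<le> gdim M (j - tdeg n i)"
    unfolding betti_num_def Let_def using kd_le unfolding kd_def by (auto intro: le_trans[OF diff_le_self])
  then show ?thesis using h unfolding betti_def by auto
qed

end

lemma betti_periodic: "i \<ge> 1 \<Longrightarrow> betti n M (i + 2) (k + int n) = betti n M i k"
proof -
  assume i: "i \<ge> 1"
  have t: "tdeg n (i + 2) = tdeg n i + int n" unfolding tdeg_def by (simp add: algebra_simps)
  have d1: "dexp n (i + 2) = dexp n i" and d2: "dexp n (Suc (i + 2)) = dexp n (Suc i)" by (auto simp: dexp_def)
  show ?thesis using i unfolding betti_def betti_num_def Let_def t d1 d2 by simp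
qed


context gmod begin

definition EE :: "int \<Rightarrow> rat" where
  "EE k = (\<Sum>i\<in>{k+2-int n..k-1}. of_nat (kd 1 i)) - of_nat (rk 1 (k+1-int n)) + of_nat (rk (n-1) (k+1-int n))"

definition TT :: "int \<Rightarrow> rat" where
  "TT k = of_nat (rk 1 (k - int n)) - (\<Sum>i\<in>{k-2*int n+2..k-int n}. of_nat (rk (n-1) i))"

lemma kd_rat: "(of_nat (kd r j) :: rat) = of_nat (gdim M j) - of_nat (rk r j)"
  using rk_kd[of r j] by (simp flip: of_nat_add)

lemma EE_step: "EE k - EE (k - 1) = betti n M 1 k - betti n M 2 (k + 1)"
proof -
  let ?f = "\<lambda>i. (of_nat (kd 1 i) :: rat)"
  have e1: "k - 1 + 2 - int n = k + 1 - int n" "k - 1 - 1 = k - 2" "k - 1 + 1 - int n = k - int n" by simp_all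
  have s1: "(\<Sum>i\<in>{k+1-int n..k-1}. ?f i) = ?f (k+1-int n) + (\<Sum>i\<in>{k+2-int n..k-1}. ?f i)"
  proof -
    have e: "k + 1 - int n + 1 = k + 2 - int n" by simp
    have le: "k+1-int n \<le> k-1" using n2 by simp
    show ?thesis using sum_Icc_lo[OF le, of ?f, unfolded e] .
  qed
  have s2: "(\<Sum>i\<in>{k+1-int n..k-1}. ?f i) = (\<Sum>i\<in>{k+1-int n..k-2}. ?f i) + ?f (k-1)"
  proof -
    have e: "k - 1 - 1 = k - 2" by simp
    have le: "k+1-int n \<le> k-1" using n2 by simp
    show ?thesis using sum_Icc_hi[OF le, of ?f, unfolded e] .
  qed
  have b1: "betti n M 1 k = of_nat (gdim M (k - 1)) - of_nat (rk 1 (k - 1)) - of_nat (rk (n - 1) (k - int n))"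
    by (rule betti_1)
  have b2: "betti n M 2 (k+1) = of_nat (gdim M (k + 1 - int n)) - of_nat (rk (n - 1) (k + 1 - int n)) - of_nat (rk 1 (k - int n))"
    using betti_2[of "k+1"] by (simp add: algebra_simps)
  show ?thesis unfolding EE_def e1 using s1 s2 b1 b2 kd_rat[of 1 "k-1"] kd_rat[of 1 "k+1-int n"] by simp
qed

lemma TT_step: "TT k - TT (k - 1) = betti n M 2 k - betti n M 1 (k - int n + 1)"
proof -
  let ?f = "\<lambda>i. (of_nat (rk (n-1) i) :: rat)"
  have e1: "k - 1 - int n = k - int n - 1" "k - 1 - 2 * int n + 2 = k - 2 * int n + 1" by simp_all
  have s1: "(\<Sum>i\<in>{k-2*int n+1..k-int n}. ?f i) = ?f (k-2*int n+1) + (\<Sum>i\<in>{k-2*int n+2..k-int n}. ?f i)"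
  proof -
    have e: "k - 2 * int n + 1 + 1 = k - 2 * int n + 2" by simp
    have le: "k-2*int n+1 \<le> k-int n" using n2 by simp
    show ?thesis using sum_Icc_lo[OF le, of ?f, unfolded e] .
  qed
  have s2: "(\<Sum>i\<in>{k-2*int n+1..k-int n}. ?f i) = (\<Sum>i\<in>{k-2*int n+1..k-int n-1}. ?f i) + ?f (k-int n)"
  proof -
    have le: "k-2*int n+1 \<le> k-int n" using n2 by simp
    show ?thesis using sum_Icc_hi[OF le, of ?f] .
  qed
  have b1: "betti n M 1 (k - int n + 1) = of_nat (gdim M (k - int n)) - of_nat (rk 1 (k - int n)) - of_nat (rk (n - 1) (k - 2 * int n + 1))"
    using betti_1[of "k - int n + 1"] by (simp add: algebra_simps)
  have b2: "betti n M 2 k = of_nat (gdim M (k - int n)) - of_nat (rk (n - 1) (k - int n)) - of_nat (rk 1 (k - int n - 1))"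
    by (rule betti_2)
  show ?thesis unfolding TT_def e1 using s1 s2 b1 b2 by simp
qed


lemma EE_aux: "s \<ge> 1 \<Longrightarrow> rk 1 K \<le> rk s K + (\<Sum>i\<in>{K+1..K+int s-1}. kd 1 i)"
proof (induction s rule: nat_induct_at_least)
  case base then show ?case by simp
next
  case (Suc s)
  have 1: "rk s K \<le> rk (s + 1) K + kd 1 (K + int s)" by (rule sylv)
  have le: "K + 1 \<le> K + int s" using Suc.hyps by simp
  have e: "K + int s - 1 = K + int (Suc s) - 1 - 1" by simp
  have "(\<Sum>i\<in>{K+1..K+int (Suc s)-1}. kd 1 i) = (\<Sum>i\<in>{K+1..K+int s-1}. kd 1 i) + kd 1 (K + int s)"
    using sum_Icc_hi[OF le, of "kd 1"] by simp
  then show ?case using Suc.IH 1 by simp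
qed

lemma EE_nonneg: "EE k \<ge> 0"
proof -
  have "rk 1 (k+1-int n) \<le> rk (n-1) (k+1-int n) + (\<Sum>i\<in>{k+1-int n+1..k+1-int n+int (n-1)-1}. kd 1 i)"
    by (rule EE_aux) (use n2 in simp)
  moreover have "k+1-int n+1 = k+2-int n" "k+1-int n+int (n-1)-1 = k - 1" using n2 by simp_all
  ultimately have "rk 1 (k+1-int n) \<le> rk (n-1) (k+1-int n) + (\<Sum>i\<in>{k+2-int n..k-1}. kd 1 i)" by simp
  then have "(of_nat (rk 1 (k+1-int n)) :: rat) \<le> of_nat (rk (n-1) (k+1-int n) + (\<Sum>i\<in>{k+2-int n..k-1}. kd 1 i))"
    by (simp only: of_nat_le_iff)
  then have "(of_nat (rk 1 (k+1-int n)) :: rat) \<le> of_nat (rk (n-1) (k+1-int n)) + (\<Sum>i\<in>{k+2-int n..k-1}. of_nat (kd 1 i))"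
    by (simp only: of_nat_add of_nat_sum)
  then show ?thesis unfolding EE_def by simp
qed

lemma TT_aux: "s \<le> n - 1 \<Longrightarrow> rk (s+1) (K - int s) + (\<Sum>i\<in>{K-int s+1..K}. rk (n-1) i) \<le> rk 1 K"
proof (induction s)
  case 0 then show ?case by simp
next
  case (Suc s)
  have f: "rk (s + 1 + (n - 2 - s)) (K - int s) + rk (s + 1 + 1) (K - int s - 1)
      \<le> rk (s + 1) (K - int s) + rk (s + 1 + (n - 2 - s) + 1) (K - int s - 1)" by (rule frob)
  have e1: "s + 1 + (n - 2 - s) = n - 1" "n - 1 + 1 = n" using Suc.prems n2 by auto
  have f2: "rk (n-1) (K - int s) + rk (Suc s + 1) (K - int (Suc s)) \<le> rk (s + 1) (K - int s)"
    using f unfolding e1 rkn by (simp add: algebra_simps)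
  have le: "K - int s \<le> K" by simp
  have e2: "K - int (Suc s) + 1 = K - int s" by simp
  have "(\<Sum>i\<in>{K-int (Suc s)+1..K}. rk (n-1) i) = rk (n-1) (K - int s) + (\<Sum>i\<in>{K-int s+1..K}. rk (n-1) i)"
    unfolding e2 using sum_Icc_lo[OF le, of "rk (n-1)"] by simp
  then show ?case using Suc.IH Suc.prems f2 by simp
qed

lemma TT_nonneg: "TT k \<ge> 0"
proof -
  have h: "rk (n-1+1) (k - int n - int (n-1)) + (\<Sum>i\<in>{k - int n-int (n-1)+1..k - int n}. rk (n-1) i) \<le> rk 1 (k - int n)"
    by (rule TT_aux) simp
  have e: "k - int n-int (n-1)+1 = k-2*int n+2" using n2 by simp
  from h[unfolded e] have "(\<Sum>i\<in>{k-2*int n+2..k - int n}. rk (n-1) i) \<le> rk 1 (k - int n)" by linarith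
  then have "(of_nat (\<Sum>i\<in>{k-2*int n+2..k - int n}. rk (n-1) i) :: rat) \<le> of_nat (rk 1 (k - int n))"
    by (simp only: of_nat_le_iff)
  then have "(\<Sum>i\<in>{k-2*int n+2..k - int n}. (of_nat (rk (n-1) i) :: rat)) \<le> of_nat (rk 1 (k - int n))"
    by (simp only: of_nat_sum)
  then show ?thesis unfolding TT_def by simp
qed


lemma bounds: "\<exists>L U. \<forall>j. gdim M j \<noteq> 0 \<longrightarrow> L \<le> j \<and> j \<le> U"
proof -
  let ?S = "{j. gdim M j \<noteq> 0}"
  have fin: "finite ?S" using fg by (simp add: fg_graded_module_def)
  show ?thesis
  proof (cases "?S = {}")
    case True then show ?thesis by auto
  next
    case False
    show ?thesis by (rule exI[of _ "Min ?S"], rule exI[of _ "Max ?S"]) (use fin in auto)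
  qed
qed

lemma rk_zero: "gdim M j = 0 \<Longrightarrow> rk r j = 0" using rk_le[of r j] by simp
lemma kd_zero: "gdim M j = 0 \<Longrightarrow> kd r j = 0" using kd_le[of r j] by simp

lemma betti_fin: "finite (supp (betti n M) i)"
proof -
  have "supp (betti n M) i \<subseteq> (\<lambda>x. x + tdeg n i) ` {j. gdim M j \<noteq> 0}"
  proof
    fix j assume "j \<in> supp (betti n M) i"
    then have "gdim M (j - tdeg n i) \<noteq> 0" using betti_supp by (auto simp: supp_def)
    then show "j \<in> (\<lambda>x. x + tdeg n i) ` {j. gdim M j \<noteq> 0}" by (intro image_eqI[of _ _ "j - tdeg n i"]) auto
  qed
  moreover have "finite {j. gdim M j \<noteq> 0}" using fg by (simp add: fg_graded_module_def)
  ultimately show ?thesis by (meson finite_imageI finite_subset)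
qed

lemma eta_step: "eta k (betti n M) - eta (k - 1) (betti n M) = betti n M 1 k - betti n M 2 (k + 1)"
proof -
  have a: "rsum (betti n M) 1 {..k} = rsum (betti n M) 1 {..k - 1} + betti n M 1 k"
    by (rule rsum_step[OF betti_fin])
  have b: "rsum (betti n M) 2 {..k+1} = rsum (betti n M) 2 {..k} + betti n M 2 (k + 1)"
    using rsum_step[OF betti_fin, of 2 "k+1"] by simp
  show ?thesis unfolding eta_def a b by simp
qed

lemma theta_step: "theta n k (betti n M) - theta n (k - 1) (betti n M) = betti n M 2 k - betti n M 1 (k - int n + 1)"
proof -
  have a: "rsum (betti n M) 1 {..k - int n + 1} = rsum (betti n M) 1 {..k - 1 - int n + 1} + betti n M 1 (k - int n + 1)"
    using rsum_step[OF betti_fin, of 1 "k - int n + 1"] by (simp add: algebra_simps)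
  have b: "rsum (betti n M) 2 {..k} = rsum (betti n M) 2 {..k - 1} + betti n M 2 k"
    by (rule rsum_step[OF betti_fin])
  show ?thesis unfolding theta_def a b by simp
qed

lemma betti_in_F: "betti n M \<in> Fcone n"
proof -
  obtain L U where LU: "\<And>j. gdim M j \<noteq> 0 \<Longrightarrow> L \<le> j \<and> j \<le> U" using bounds by blast
  let ?v = "betti n M"
  have z1: "?v 1 j = 0" if "j - 1 < L \<or> j - 1 > U" for j
    using betti_supp[of 1 j, unfolded tdeg1] LU[of "j - 1"] that by force
  have z2: "?v 2 j = 0" if "j - int n < L \<or> j - int n > U" for j
    using betti_supp[of 2 j, unfolded tdeg2] LU[of "j - int n"] that by force
  have g0: "gdim M j = 0" if "j < L \<or> j > U" for j using LU[of j] that by force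
  have etaE: "eta k ?v = EE k" for k
  proof -
    have "(\<lambda>k. eta k ?v - EE k) k = (\<lambda>k. eta k ?v - EE k) (L - 1)"
      apply (rule int_const) subgoal for k using eta_step[of k] EE_step[of k] by linarith done
    moreover have "eta (L - 1) ?v = 0"
    proof -
      have "rsum ?v 1 {..L-1} = 0" by (rule rsum_zero, rule z1) auto
      moreover have "rsum ?v 2 {..L-1+1} = 0" by (rule rsum_zero, rule z2) (use n2 in auto)
      ultimately show ?thesis by (simp add: eta_def)
    qed
    moreover have "EE (L - 1) = 0"
    proof -
      have "(\<Sum>i\<in>{L-1+2-int n..L-1-1}. (of_nat (kd 1 i) :: rat)) = 0"
        by (rule sum.neutral) (auto simp: kd_zero g0)
      moreover have "rk 1 (L-1+1-int n) = 0" "rk (n-1) (L-1+1-int n) = 0"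
        using n2 by (auto intro!: rk_zero g0)
      ultimately show ?thesis by (simp add: EE_def)
    qed
    ultimately show ?thesis by simp
  qed
  have thetaT: "theta n k ?v = TT k" for k
  proof -
    have "(\<lambda>k. theta n k ?v - TT k) k = (\<lambda>k. theta n k ?v - TT k) (L - 1)"
      apply (rule int_const) subgoal for k using theta_step[of k] TT_step[of k] by linarith done
    moreover have "theta n (L - 1) ?v = 0"
    proof -
      have "rsum ?v 2 {..L-1} = 0" by (rule rsum_zero, rule z2) (use n2 in auto)
      moreover have "rsum ?v 1 {..L - 1 - int n + 1} = 0" by (rule rsum_zero, rule z1) (use n2 in auto)
      ultimately show ?thesis by (simp add: theta_def)
    qed
    moreover have "TT (L - 1) = 0"
    proof -
      have "(\<Sum>i\<in>{L-1-2*int n+2..L-1-int n}. (of_nat (rk (n-1) i) :: rat)) = 0"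
        by (rule sum.neutral) (use n2 in \<open>auto simp: rk_zero g0\<close>)
      moreover have "rk 1 (L-1-int n) = 0"
        using n2 by (auto intro!: rk_zero g0)
      ultimately show ?thesis by (simp add: TT_def)
    qed
    ultimately show ?thesis by simp
  qed
  have etainf: "eta_inf ?v = 0"
  proof -
    let ?k = "U + int n"
    have "rsum ?v 1 UNIV = rsum ?v 1 {..?k}" by (rule rsum_UNIV, rule z1) (use n2 in auto)
    moreover have "rsum ?v 2 UNIV = rsum ?v 2 {..?k+1}" by (rule rsum_UNIV, rule z2) auto
    ultimately have "eta_inf ?v = eta ?k ?v" by (simp add: eta_inf_def eta_def)
    also have "\<dots> = EE ?k" by (rule etaE)
    also have "\<dots> = 0"
    proof -
      have "(\<Sum>i\<in>{?k+2-int n..?k-1}. (of_nat (kd 1 i) :: rat)) = 0"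
        by (rule sum.neutral) (auto simp: kd_zero g0)
      moreover have "rk 1 (?k+1-int n) = 0" "rk (n-1) (?k+1-int n) = 0"
        by (auto intro!: rk_zero g0)
      ultimately show ?thesis by (simp add: EE_def)
    qed
    finally show ?thesis .
  qed
  have alpha0: "alpha n 0 k ?v \<ge> 0" for k
  proof -
    have a: "alpha n 0 k ?v = ?v 0 k - ?v 2 (k + int n)" unfolding alpha_def by (simp only: add_0)
    show ?thesis unfolding a betti_0[of k] betti_2[of "k + int n"] by simp
  qed
  have alphai: "alpha n i k ?v = 0" if "i \<ge> 1" for i k
  proof -
    have "betti n M (i+2) (k + int n) = betti n M i k" by (rule betti_periodic[OF that])
    then show ?thesis unfolding alpha_def by simp
  qed
  have vs: "?v \<in> Vspace" using betti_fin by (simp add: Vspace_def supp_def)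
  show ?thesis unfolding Fcone_def
    using vs alpha0 alphai etainf etaE thetaT EE_nonneg TT_nonneg
    by (auto simp: betti_def)
qed

end

lemma pos_mono: "S \<subseteq> T \<Longrightarrow> pos S \<subseteq> pos T"
  unfolding pos_def by blast

lemma pos_zero: "(\<lambda>i j. 0) \<in> pos S"
  unfolding pos_def by (rule CollectI, rule exI[of _ "{}"]) auto

lemma pos_base: "s \<in> S \<Longrightarrow> s \<in> pos S"
  unfolding pos_def by (rule CollectI, rule exI[of _ "{s}"], rule exI[of _ "\<lambda>_. 1"]) auto

lemma pos_add:
  assumes v: "v \<in> pos S" and w: "w \<in> pos S"
  shows "(\<lambda>i j. v i j + w i j) \<in> pos S"
proof -
  obtain A c where A: "finite A" "A \<subseteq> S" "\<forall>s\<in>A. c s \<ge> 0" "v = (\<lambda>i j. \<Sum>s\<in>A. c s * s i j)"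
    using v unfolding pos_def by blast
  obtain B d where B: "finite B" "B \<subseteq> S" "\<forall>s\<in>B. d s \<ge> 0" "w = (\<lambda>i j. \<Sum>s\<in>B. d s * s i j)"
    using w unfolding pos_def by blast
  let ?e = "\<lambda>s. (if s \<in> A then c s else 0) + (if s \<in> B then d s else 0)"
  have 1: "(\<Sum>s\<in>A \<union> B. (if s \<in> A then c s else 0) * s i j) = (\<Sum>s\<in>A. c s * s i j)" for i j
    by (rule sum.mono_neutral_cong_right) (use A B in auto)
  have 2: "(\<Sum>s\<in>A \<union> B. (if s \<in> B then d s else 0) * s i j) = (\<Sum>s\<in>B. d s * s i j)" for i j
    by (rule sum.mono_neutral_cong_right) (use A B in auto)
  have eq: "(\<lambda>i j. v i j + w i j) = (\<lambda>i j. \<Sum>s\<in>A \<union> B. ?e s * s i j)"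
    unfolding A(4) B(4) 1[symmetric] 2[symmetric] by (simp add: distrib_right sum.distrib)
  have nn: "\<forall>s\<in>A \<union> B. ?e s \<ge> 0" using A(3) B(3) by auto
  show ?thesis unfolding pos_def mem_Collect_eq
    by (intro exI[of _ "A \<union> B"] exI[of _ ?e] conjI eq nn) (use A B in auto)
qed

lemma pos_smult:
  assumes v: "v \<in> pos S" and a: "a \<ge> 0"
  shows "(\<lambda>i j. a * v i j) \<in> pos S"
proof -
  obtain A c where A: "finite A" "A \<subseteq> S" "\<forall>s\<in>A. c s \<ge> 0" "v = (\<lambda>i j. \<Sum>s\<in>A. c s * s i j)"
    using v unfolding pos_def by blast
  have "(\<lambda>i j. a * v i j) = (\<lambda>i j. \<Sum>s\<in>A. (a * c s) * s i j)"
    using A(4) by (auto simp: sum_distrib_left mult.assoc)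
  moreover have "\<forall>s\<in>A. a * c s \<ge> 0" using A(3) a by auto
  ultimately show ?thesis unfolding pos_def mem_Collect_eq
    by (intro exI[of _ A] exI[of _ "\<lambda>s. a * c s"] conjI) (use A in auto)
qed

lemma pos_sub_cone:
  assumes z: "(\<lambda>i j. 0) \<in> C"
    and add: "\<And>v w. v \<in> C \<Longrightarrow> w \<in> C \<Longrightarrow> (\<lambda>i j. v i j + w i j) \<in> C"
    and sm: "\<And>a v. a \<ge> 0 \<Longrightarrow> v \<in> C \<Longrightarrow> (\<lambda>i j. a * v i j) \<in> C"
    and S: "S \<subseteq> C"
  shows "pos S \<subseteq> C"
proof
  fix v assume "v \<in> pos S"
  then obtain A c where A: "finite A" "A \<subseteq> S" "\<forall>s\<in>A. c s \<ge> 0" "v = (\<lambda>i j. \<Sum>s\<in>A. c s * s i j)"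
    unfolding pos_def by blast
  have "A \<subseteq> S \<Longrightarrow> (\<forall>s\<in>A. c s \<ge> 0) \<Longrightarrow> (\<lambda>i j. \<Sum>s\<in>A. c s * s i j) \<in> C"
    using A(1)
  proof (induction A rule: finite_induct)
    case empty then show ?case using z by simp
  next
    case (insert x F)
    have "(\<lambda>i j. c x * x i j) \<in> C" using insert S by (intro sm) auto
    moreover have "(\<lambda>i j. \<Sum>s\<in>F. c s * s i j) \<in> C" using insert by auto
    ultimately have "(\<lambda>i j. c x * x i j + (\<Sum>s\<in>F. c s * s i j)) \<in> C" by (rule add)
    then show ?case using insert by simp
  qed
  then show "v \<in> C" using A by simp
qed

lemma pos_pos: "pos (pos S) \<subseteq> pos S"
  by (rule pos_sub_cone) (auto intro: pos_zero pos_add pos_smult)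

lemma Fcone_lin:
  assumes v: "v \<in> Fcone n" and w: "w \<in> Fcone n" and a: "a \<ge> 0" and b: "b \<ge> 0"
  shows "(\<lambda>i j. a * v i j + b * w i j) \<in> Fcone n"
proof -
  let ?u = "\<lambda>i j. a * v i j + b * w i j"
  have fv: "finite (supp v i)" and fw: "finite (supp w i)" for i
    using v w by (auto simp: Fcone_def Vspace_def supp_def)
  have rs: "rsum ?u i S = a * rsum v i S + b * rsum w i S" for i S by (rule rsum_lin[OF fv fw])
  have "supp ?u i \<subseteq> supp v i \<union> supp w i" for i by (auto simp: supp_def)
  then have "finite (supp ?u i)" for i using fv fw by (meson finite_UnI finite_subset)
  then have V: "?u \<in> Vspace" by (simp add: Vspace_def supp_def)
  have al: "alpha n i k ?u = a * alpha n i k v + b * alpha n i k w" for i k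
    by (simp add: alpha_def algebra_simps)
  have th: "theta n k ?u = a * theta n k v + b * theta n k w" for k
    by (simp add: theta_def rs algebra_simps)
  have et: "eta k ?u = a * eta k v + b * eta k w" for k
    by (simp add: eta_def rs algebra_simps)
  have ei: "eta_inf ?u = a * eta_inf v + b * eta_inf w"
    by (simp add: eta_inf_def rs algebra_simps)
  have v': "\<forall>i\<le>2. \<forall>j. v i j \<ge> 0" "\<forall>k. alpha n 0 k v \<ge> 0" "\<forall>k. theta n k v \<ge> 0" "\<forall>k. eta k v \<ge> 0"
     "\<forall>i\<ge>1. \<forall>k. alpha n i k v = 0" "eta_inf v = 0" using v unfolding Fcone_def by auto
  have w': "\<forall>i\<le>2. \<forall>j. w i j \<ge> 0" "\<forall>k. alpha n 0 k w \<ge> 0" "\<forall>k. theta n k w \<ge> 0" "\<forall>k. eta k w \<ge> 0"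
     "\<forall>i\<ge>1. \<forall>k. alpha n i k w = 0" "eta_inf w = 0" using w unfolding Fcone_def by auto
  show ?thesis unfolding Fcone_def mem_Collect_eq al th et ei
    using v' w' a b V by (simp add: add_nonneg_nonneg mult_nonneg_nonneg)
qed

lemma Fcone_zero: "(\<lambda>i j. 0) \<in> Fcone n"
  by (auto simp: Fcone_def Vspace_def alpha_def theta_def eta_def eta_inf_def rsum_def)

lemma Fcone_add: "v \<in> Fcone n \<Longrightarrow> w \<in> Fcone n \<Longrightarrow> (\<lambda>i j. v i j + w i j) \<in> Fcone n"
  using Fcone_lin[of v n w 1 1] by simp

lemma Fcone_smult: "a \<ge> 0 \<Longrightarrow> v \<in> Fcone n \<Longrightarrow> (\<lambda>i j. a * v i j) \<in> Fcone n"
  using Fcone_lin[of v n v a 0] by simp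

lemma pos_sub_Fcone: "S \<subseteq> Fcone n \<Longrightarrow> pos S \<subseteq> Fcone n"
  by (rule pos_sub_cone[OF Fcone_zero Fcone_add Fcone_smult])


lemma rsum_pi: "rsum (pi_seq d) i S = (case d i of None \<Rightarrow> 0 | Some j \<Rightarrow> if j \<in> S then 1 else 0)"
proof (cases "d i")
  case None then show ?thesis by (simp add: rsum_def pi_seq_def)
next
  case (Some j)
  have "{j' \<in> S. pi_seq d i j' \<noteq> 0} = (if j \<in> S then {j} else {})"
    using Some by (auto simp: pi_seq_def)
  then show ?thesis using Some unfolding rsum_def by (simp add: pi_seq_def)
qed

lemma pi_fin: "finite (supp (pi_seq d) i)"
proof -
  have "supp (pi_seq d) i \<subseteq> (case d i of None \<Rightarrow> {} | Some j \<Rightarrow> {j})"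
    by (auto simp: supp_def pi_seq_def split: option.splits)
  then show ?thesis by (rule finite_subset) (simp split: option.splits)
qed

lemma pi_in_F:
  assumes d: "degree_seq n d" and n2: "n \<ge> 2"
  shows "pi_seq d \<in> Fcone n"
  using d unfolding degree_seq_def
proof (elim disjE exE conjE)
  fix d0 assume d0: "d 0 = Some d0" and dn: "\<forall>i\<ge>1. d i = None"
  have z: "pi_seq d i j = 0" if "i \<ge> 1" for i j using dn that by (simp add: pi_seq_def)
  have r: "rsum (pi_seq d) i S = 0" if "i \<ge> 1" for i S using dn that by (simp add: rsum_pi)
  have V: "pi_seq d \<in> Vspace" using pi_fin by (simp add: Vspace_def supp_def)
  show ?thesis unfolding Fcone_def mem_Collect_eq
    using V z r by (auto simp: alpha_def theta_def eta_def eta_inf_def pi_seq_def)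
next
  fix e assume de: "\<forall>i. d i = Some (e i)" and e01: "e 0 < e 1" "e 1 < e 0 + int n"
    and ep: "\<forall>i. e (i + 2) - e i = int n"
  have p: "pi_seq d i j = (if e i = j then 1 else 0)" for i j using de by (simp add: pi_seq_def)
  have r: "rsum (pi_seq d) i S = (if e i \<in> S then 1 else 0)" for i S using de by (simp add: rsum_pi)
  have e2: "e 2 = e 0 + int n" and e3: "e 3 = e 1 + int n" using ep[rule_format, of 0] ep[rule_format, of 1] by (simp_all add: eval_nat_numeral)
  have V: "pi_seq d \<in> Vspace" using pi_fin by (simp add: Vspace_def supp_def)
  have al: "alpha n i k (pi_seq d) = 0" for i k
    using ep[rule_format, of i] by (auto simp: alpha_def p)
  have th: "theta n k (pi_seq d) \<ge> 0" for k
    using e01 e2 by (auto simp: theta_def r)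
  have et: "eta k (pi_seq d) \<ge> 0" for k
    using e01 e2 n2 by (auto simp: eta_def r)
  have ei: "eta_inf (pi_seq d) = 0" by (simp add: eta_inf_def r)
  show ?thesis unfolding Fcone_def mem_Collect_eq
    using V al th et ei by (auto simp: p)
qed

definition sq :: "nat \<Rightarrow> int \<Rightarrow> int \<Rightarrow> nat \<Rightarrow> int" where
  "sq n d0 d1 i = (if even i then d0 else d1) + int (i div 2) * int n"

lemma sq_simps: "sq n d0 d1 0 = d0" "sq n d0 d1 1 = d1" "sq n d0 d1 2 = d0 + int n"
  "sq n d0 d1 (i + 2) = sq n d0 d1 i + int n"
  "sq n d0 d1 (Suc 0) = d1" "sq n d0 d1 (Suc (Suc i)) = sq n d0 d1 i + int n"
  by (auto simp: sq_def algebra_simps)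

lemma degree_seq_sq: "d0 < d1 \<Longrightarrow> d1 < d0 + int n \<Longrightarrow> degree_seq n (\<lambda>i. Some (sq n d0 d1 i))"
  unfolding degree_seq_def by (intro disjI2 exI[of _ "sq n d0 d1"]) (auto simp: sq_def algebra_simps)

lemma degree_seq_inf: "degree_seq n (\<lambda>i. if i = 0 then Some d0 else None)"
  unfolding degree_seq_def by auto


lemma pos_sum:
  assumes "finite J" "\<And>j. j \<in> J \<Longrightarrow> f j \<ge> 0" "\<And>j. j \<in> J \<Longrightarrow> g j \<in> S"
  shows "(\<lambda>i k. \<Sum>j\<in>J. f j * g j i k) \<in> pos S"
  using assms
proof (induction J rule: finite_induct)
  case empty then show ?case using pos_zero by simp
next
  case (insert x F)
  have "(\<lambda>i k. f x * g x i k + (\<Sum>j\<in>F. f j * g j i k)) \<in> pos S"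
    by (rule pos_add) (use insert in \<open>auto intro: pos_smult pos_base\<close>)
  then show ?case using insert by simp
qed

lemma F_zero_rows:
  assumes v: "v \<in> Fcone n" and s1: "supp v 1 = {}" and s2: "supp v 2 = {}"
  shows "i \<ge> 1 \<Longrightarrow> v i j = 0"
proof (induction i arbitrary: j rule: less_induct)
  case (less i)
  show ?case
  proof (cases "i \<le> 2")
    case True
    then have "i = 1 \<or> i = 2" using less.prems by auto
    then show ?thesis using s1 s2 by (auto simp: supp_def)
  next
    case False
    have al: "alpha n (i - 2) (j - int n) v = 0" using v False unfolding Fcone_def by auto
    have e: "i - 2 + 2 = i" using False by simp
    have "v (i - 2) (j - int n) = v i j" using al unfolding alpha_def e by simp
    moreover have "v (i - 2) (j - int n) = 0" using less.IH[of "i - 2"] False by simp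
    ultimately show ?thesis by simp
  qed
qed

lemma F_base:
  assumes v: "v \<in> Fcone n" and s1: "supp v 1 = {}" and s2: "supp v 2 = {}"
  shows "v \<in> Dcone n"
proof -
  let ?J = "supp v 0"
  let ?g = "\<lambda>j. pi_seq (\<lambda>i. if i = 0 then Some j else None)"
  have fin: "finite ?J" using v by (simp add: Fcone_def Vspace_def supp_def)
  have nn: "v 0 j \<ge> 0" for j using v by (simp add: Fcone_def)
  have eq: "v = (\<lambda>i k. \<Sum>j\<in>?J. v 0 j * ?g j i k)"
  proof (intro ext)
    fix i k
    show "v i k = (\<Sum>j\<in>?J. v 0 j * ?g j i k)"
    proof (cases "i = 0")
      case True
      have "(\<Sum>j\<in>?J. v 0 j * ?g j i k) = (\<Sum>j\<in>?J. if j = k then v 0 j else 0)"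
        using True by (intro sum.cong) (auto simp: pi_seq_def)
      also have "\<dots> = (if k \<in> ?J then v 0 k else 0)" using fin by (simp add: sum.delta')
      also have "\<dots> = v 0 k" by (auto simp: supp_def)
      finally show ?thesis using True by simp
    next
      case False
      then show ?thesis using F_zero_rows[OF v s1 s2, of i k] by (simp add: pi_seq_def)
    qed
  qed
  have "(\<lambda>i k. \<Sum>j\<in>?J. v 0 j * ?g j i k) \<in> Dcone n"
    unfolding Dcone_def by (rule pos_sum[OF fin]) (use nn degree_seq_inf in auto)
  then show ?thesis using eq by simp
qed


lemma F_step:
  assumes v: "v \<in> Fcone n" and n2: "n \<ge> 2" and ne: "supp v 1 \<noteq> {} \<or> supp v 2 \<noteq> {}"
  shows "\<exists>v' c d0 d1. v' \<in> Fcone n \<and> c > 0 \<and> d0 < d1 \<and> d1 < d0 + int n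
     \<and> v = (\<lambda>i j. v' i j + c * pi_seq (\<lambda>i. Some (sq n d0 d1 i)) i j)
     \<and> card (supp v' 1) + card (supp v' 2) < card (supp v 1) + card (supp v 2)"
proof -
  have fin: "finite (supp v i)" for i using v by (simp add: Fcone_def Vspace_def supp_def)
  have nn: "i \<le> 2 \<Longrightarrow> v i j \<ge> 0" for i j using v by (simp add: Fcone_def)
  have nn1: "\<And>j. v 1 j \<ge> 0" and nn2: "\<And>j. v 2 j \<ge> 0" and nn0: "\<And>j. v 0 j \<ge> 0" using nn by auto
  have ei: "rsum v 1 UNIV = rsum v 2 UNIV" using v by (simp add: Fcone_def eta_inf_def)
  have al0f: "alpha n 0 k v \<ge> 0" for k using v unfolding Fcone_def by blast
  have al0: "v 0 k - v 2 (k + int n) \<ge> 0" for k using al0f[of k] unfolding alpha_def by (simp only: add_0)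
  have th: "theta n k v \<ge> 0" for k using v by (simp add: Fcone_def)
  have et: "eta k v \<ge> 0" for k using v by (simp add: Fcone_def)
  have ali: "alpha n i k v = 0" if "i \<ge> 1" for i k using v that by (simp add: Fcone_def)
  have pos_of: "v i j > 0" if "j \<in> supp v i" "i \<le> 2" for i j
    using that nn[of i j] by (auto simp: supp_def)
  have S1: "supp v 1 \<noteq> {}" and S2: "supp v 2 \<noteq> {}"
  proof -
    have "supp v 1 \<noteq> {}" if h: "supp v 2 \<noteq> {}"
    proof -
      obtain j where j: "j \<in> supp v 2" using h by blast
      have "rsum v 2 UNIV \<ge> v 2 j" by (rule rsum_ge[OF nn2 fin]) simp
      then have "rsum v 1 UNIV \<noteq> 0" using ei pos_of[OF j] by simp
      then show ?thesis using rsum_pos by (fastforce simp: supp_def)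
    qed
    moreover have "supp v 2 \<noteq> {}" if h: "supp v 1 \<noteq> {}"
    proof -
      obtain j where j: "j \<in> supp v 1" using h by blast
      have "rsum v 1 UNIV \<ge> v 1 j" by (rule rsum_ge[OF nn1 fin]) simp
      then have "rsum v 2 UNIV \<noteq> 0" using ei pos_of[OF j] by simp
      then show ?thesis using rsum_pos by (fastforce simp: supp_def)
    qed
    ultimately show "supp v 1 \<noteq> {}" "supp v 2 \<noteq> {}" using ne by blast+
  qed
  define d1 where "d1 = Min (supp v 1)"
  define d2 where "d2 = Min (supp v 2)"
  have d1in: "d1 \<in> supp v 1" unfolding d1_def using S1 fin by (rule_tac Min_in) auto
  have d2in: "d2 \<in> supp v 2" unfolding d2_def using S2 fin by (rule_tac Min_in) auto
  have below1: "v 1 j = 0" if h: "j < d1" for j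
  proof (rule ccontr)
    assume "v 1 j \<noteq> 0"
    then have "j \<in> supp v 1" by (simp add: supp_def)
    then have "d1 \<le> j" unfolding d1_def using fin[of 1] by (simp add: Min_le)
    then show False using h by simp
  qed
  have below2: "v 2 j = 0" if h: "j < d2" for j
  proof (rule ccontr)
    assume "v 2 j \<noteq> 0"
    then have "j \<in> supp v 2" by (simp add: supp_def)
    then have "d2 \<le> j" unfolding d2_def using fin[of 2] by (simp add: Min_le)
    then show False using h by simp
  qed
  have p1: "v 1 d1 > 0" using pos_of[OF d1in] by simp
  have p2: "v 2 d2 > 0" using pos_of[OF d2in] by simp
  have d12: "d1 < d2"
  proof -
    have "eta (d2 - 1) v \<ge> 0" by (rule et)
    then have "rsum v 1 {..d2 - 1} \<ge> rsum v 2 {..d2}" by (simp add: eta_def)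
    moreover have "rsum v 2 {..d2} \<ge> v 2 d2" by (rule rsum_ge[OF nn2 fin]) simp
    ultimately have "rsum v 1 {..d2 - 1} \<noteq> 0" using p2 by simp
    then obtain j where "j \<le> d2 - 1" "v 1 j \<noteq> 0" using rsum_pos by fastforce
    then show ?thesis using below1[of j] by fastforce
  qed
  have d21: "d2 < d1 + int n"
  proof -
    have "theta n (d1 + int n - 1) v \<ge> 0" by (rule th)
    then have "rsum v 2 {..d1 + int n - 1} \<ge> rsum v 1 {..d1}" by (simp add: theta_def)
    moreover have "rsum v 1 {..d1} \<ge> v 1 d1" by (rule rsum_ge[OF nn1 fin]) simp
    ultimately have "rsum v 2 {..d1 + int n - 1} \<noteq> 0" using p1 by simp
    then obtain j where "j \<le> d1 + int n - 1" "v 2 j \<noteq> 0" using rsum_pos by fastforce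
    then show ?thesis using below2[of j] by fastforce
  qed
  define d0 where "d0 = d2 - int n"
  define c where "c = min (v 1 d1) (v 2 d2)"
  define p where "p = pi_seq (\<lambda>i. Some (sq n d0 d1 i))"
  define v' where "v' = (\<lambda>i j. v i j - c * p i j)"
  have c0: "c > 0" using p1 p2 by (simp add: c_def)
  have pv: "p i j = (if sq n d0 d1 i = j then 1 else 0)" for i j by (simp add: p_def pi_seq_def)
  have p0: "p 0 j = (if j = d0 then 1 else 0)" and pp1: "p 1 j = (if j = d1 then 1 else 0)"
    and pp2: "p 2 j = (if j = d2 then 1 else 0)" for j
    by (auto simp: pv sq_simps d0_def)
  have pp1': "p (Suc 0) j = (if j = d1 then 1 else 0)" for j by (auto simp: pv sq_simps)
  have rp: "rsum p i S = (if sq n d0 d1 i \<in> S then 1 else 0)" for i S by (simp add: p_def rsum_pi)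
  have rp1: "rsum p 1 S = (if d1 \<in> S then 1 else 0)" and rp2: "rsum p 2 S = (if d2 \<in> S then 1 else 0)" for S
    by (auto simp: rp sq_simps d0_def)
  have rp1': "rsum p (Suc 0) S = (if d1 \<in> S then 1 else 0)" for S by (auto simp: rp sq_simps)
  have pfin: "finite (supp p i)" for i unfolding p_def by (rule pi_fin)
  have rs: "rsum v' i S = rsum v i S - c * rsum p i S" for i S
    using rsum_lin[OF fin pfin, of 1 "-c" i S] by (simp add: v'_def)
  have V: "v' \<in> Vspace"
  proof -
    have "supp v' i \<subseteq> supp v i \<union> supp p i" for i by (auto simp: v'_def supp_def)
    then have "finite (supp v' i)" for i using fin pfin by (meson finite_UnI finite_subset)
    then show ?thesis by (simp add: Vspace_def supp_def)
  qed
  have nn': "v' i j \<ge> 0" if "i \<le> 2" for i j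
  proof -
    have "i = 0 \<or> i = 1 \<or> i = 2" using that by auto
    moreover have "v 0 d0 \<ge> c" using al0[of d0] by (simp add: d0_def c_def)
    moreover have "v 1 d1 \<ge> c" "v 2 d2 \<ge> c" by (auto simp: c_def)
    ultimately show ?thesis using nn[OF that, of j] c0 by (auto simp: v'_def p0 pp1 pp1' pp2)
  qed
  have alp: "alpha n i k p = 0" for i k by (simp add: alpha_def pv sq_simps)
  have al': "alpha n i k v' = alpha n i k v" for i k using alp[of i k] by (simp add: alpha_def v'_def algebra_simps)
  have th': "theta n k v' \<ge> 0" for k
  proof (cases "d2 \<le> k \<and> \<not> d1 \<le> k - int n + 1")
    case True
    have "rsum v 1 {..k - int n + 1} = 0" by (rule rsum_zero) (use True below1 in auto)
    moreover have "rsum v 2 {..k} \<ge> v 2 d2" by (rule rsum_ge[OF nn2 fin]) (use True in simp)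
    moreover have "v 2 d2 \<ge> c" by (simp add: c_def)
    ultimately show ?thesis using True by (simp add: theta_def rs rp1 rp1' rp2)
  next
    case False
    then show ?thesis using th[of k] c0 by (auto simp: theta_def rs rp1 rp1' rp2)
  qed
  have et': "eta k v' \<ge> 0" for k
  proof (cases "d1 \<le> k \<and> \<not> d2 \<le> k + 1")
    case True
    have "rsum v 2 {..k + 1} = 0" by (rule rsum_zero) (use True below2 in auto)
    moreover have "rsum v 1 {..k} \<ge> v 1 d1" by (rule rsum_ge[OF nn1 fin]) (use True in simp)
    moreover have "v 1 d1 \<ge> c" by (simp add: c_def)
    ultimately show ?thesis using True by (simp add: eta_def rs rp1 rp1' rp2)
  next
    case False
    then show ?thesis using et[of k] c0 by (auto simp: eta_def rs rp1 rp1' rp2)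
  qed
  have ei': "eta_inf v' = 0" using ei by (simp add: eta_inf_def rs rp1 rp1' rp2)
  have F': "v' \<in> Fcone n" unfolding Fcone_def mem_Collect_eq
    using V nn' al' ali th' et' ei' al0f by simp
  have eq: "v = (\<lambda>i j. v' i j + c * pi_seq (\<lambda>i. Some (sq n d0 d1 i)) i j)"
    by (simp add: v'_def p_def)
  have sub1: "supp v' 1 \<subseteq> supp v 1" using d1in by (auto simp: supp_def v'_def pp1 pp1')
  have sub2: "supp v' 2 \<subseteq> supp v 2" using d2in by (auto simp: supp_def v'_def pp2)
  have "supp v' 1 \<subset> supp v 1 \<or> supp v' 2 \<subset> supp v 2"
  proof (cases "c = v 1 d1")
    case True
    then have "d1 \<notin> supp v' 1" by (simp add: supp_def v'_def pp1 pp1')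
    then show ?thesis using sub1 d1in by blast
  next
    case False
    then have "c = v 2 d2" by (simp add: c_def min_def split: if_splits)
    then have "d2 \<notin> supp v' 2" by (simp add: supp_def v'_def pp2)
    then show ?thesis using sub2 d2in by blast
  qed
  moreover have c1: "card (supp v' 1) \<le> card (supp v 1)" by (rule card_mono[OF fin sub1])
  moreover have c2: "card (supp v' 2) \<le> card (supp v 2)" by (rule card_mono[OF fin sub2])
  ultimately have "card (supp v' 1) + card (supp v' 2) < card (supp v 1) + card (supp v 2)"
  proof (elim disjE)
    assume "supp v' 1 \<subset> supp v 1"
    then have "card (supp v' 1) < card (supp v 1)" by (rule psubset_card_mono[OF fin])
    then show ?thesis using c2 by linarith
  next
    assume "supp v' 2 \<subset> supp v 2"
    then have "card (supp v' 2) < card (supp v 2)" by (rule psubset_card_mono[OF fin])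
    then show ?thesis using c1 by linarith
  qed
  moreover have "d0 < d1" "d1 < d0 + int n" using d12 d21 by (auto simp: d0_def)
  ultimately show ?thesis
    by (intro exI[of _ v'] exI[of _ c] exI[of _ d0] exI[of _ d1] conjI F' c0 eq)
qed

lemma F_sub_D: assumes n2: "n \<ge> 2" shows "Fcone n \<subseteq> Dcone n"
proof
  fix v assume "v \<in> Fcone n"
  then show "v \<in> Dcone n"
  proof (induction "card (supp v 1) + card (supp v 2)" arbitrary: v rule: less_induct)
    case (less v)
    show ?case
    proof (cases "supp v 1 = {} \<and> supp v 2 = {}")
      case True then show ?thesis using F_base[OF less.prems] by blast
    next
      case False
      then have ne: "supp v 1 \<noteq> {} \<or> supp v 2 \<noteq> {}" by blast
      obtain v' c d0 d1 where st: "v' \<in> Fcone n" "c > 0" "d0 < d1" "d1 < d0 + int n"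
        "v = (\<lambda>i j. v' i j + c * pi_seq (\<lambda>i. Some (sq n d0 d1 i)) i j)"
        "card (supp v' 1) + card (supp v' 2) < card (supp v 1) + card (supp v 2)"
        using F_step[OF less.prems n2, OF ne] by (elim exE conjE) (rule that, assumption+)
      have "v' \<in> Dcone n" using less.hyps[OF st(6) st(1)] .
      moreover have "pi_seq (\<lambda>i. Some (sq n d0 d1 i)) \<in> Dcone n"
        unfolding Dcone_def by (rule pos_base) (use degree_seq_sq[OF st(3) st(4)] in blast)
      ultimately show ?thesis unfolding st(5) Dcone_def
        by (intro pos_add pos_smult) (use st(2) in auto)
    qed
  qed
qed

lemma D_sub_F: assumes n2: "n \<ge> 2" shows "Dcone n \<subseteq> Fcone n"
  unfolding Dcone_def by (rule pos_sub_Fcone) (use pi_in_F n2 in blast)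


definition cgd :: "int \<Rightarrow> nat \<Rightarrow> int \<Rightarrow> nat" where
  "cgd d0 a j = (if d0 \<le> j \<and> j < d0 + int a then 1 else 0)"

definition cyc :: "int \<Rightarrow> nat \<Rightarrow> 'k::field grmod" where
  "cyc d0 a = (cgd d0 a, \<lambda>j. if d0 \<le> j \<and> j + 1 < d0 + int a then 1\<^sub>m 1 else 0\<^sub>m (cgd d0 a (j+1)) (cgd d0 a j))"

lemma gdim_cyc: "gdim (cyc d0 a) = cgd d0 a" by (rule ext) (simp add: cyc_def gdim_def)
lemma xmat_cyc: "xmat (cyc d0 a :: 'k::field grmod) j = (if d0 \<le> j \<and> j + 1 < d0 + int a then 1\<^sub>m 1 else 0\<^sub>m (cgd d0 a (j+1)) (cgd d0 a j))"
  by (simp add: cyc_def xmat_def)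

lemma xmat_cyc_carrier: "xmat (cyc d0 a :: 'k::field grmod) j \<in> carrier_mat (cgd d0 a (j+1)) (cgd d0 a j)"
  by (auto simp: xmat_cyc cgd_def)

lemma one0: "(1\<^sub>m 0 :: 'k::field mat) = 0\<^sub>m 0 0" by (rule eq_matI) auto

lemma xpow_cyc: "xpow (cyc d0 a :: 'k::field grmod) j r =
  (if d0 \<le> j \<and> j + int r < d0 + int a then 1\<^sub>m 1 else 0\<^sub>m (cgd d0 a (j + int r)) (cgd d0 a j))"
proof (induction r)
  case 0
  then show ?case by (auto simp: gdim_cyc cgd_def one0)
next
  case (Suc r)
  have X: "xmat (cyc d0 a :: 'k grmod) (j + int r) \<in> carrier_mat (cgd d0 a (j + int r + 1)) (cgd d0 a (j + int r))"
    by (rule xmat_cyc_carrier)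
  have e: "j + int (Suc r) = j + int r + 1" by simp
  show ?case
  proof (cases "d0 \<le> j \<and> j + int r + 1 < d0 + int a")
    case True
    then show ?thesis unfolding e using Suc.IH by (simp add: xmat_cyc)
  next
    case F: False
    show ?thesis
    proof (cases "d0 \<le> j \<and> j + int r < d0 + int a")
      case True
      then have c1: "cgd d0 a j = 1" "cgd d0 a (j + int r) = 1" by (auto simp: cgd_def)
      have "xpow (cyc d0 a :: 'k grmod) j (Suc r) = 0\<^sub>m (cgd d0 a (j + int r + 1)) 1 * 1\<^sub>m 1"
        using Suc.IH True F c1 by (simp add: xmat_cyc)
      also have "\<dots> = 0\<^sub>m (cgd d0 a (j + int r + 1)) 1" by simp
      finally show ?thesis unfolding e using F c1 by auto
    next
      case False
      then have "xpow (cyc d0 a :: 'k grmod) j (Suc r) = xmat (cyc d0 a) (j + int r) * 0\<^sub>m (cgd d0 a (j + int r)) (cgd d0 a j)"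
        using Suc.IH False by simp
      also have "\<dots> = 0\<^sub>m (cgd d0 a (j + int r + 1)) (cgd d0 a j)" using X by simp
      finally show ?thesis unfolding e using F by auto
    qed
  qed
qed

lemma fg_cyc: assumes "a \<le> n" shows "fg_graded_module n (cyc d0 a :: 'k::field grmod)"
proof -
  have "{j. gdim (cyc d0 a :: 'k grmod) j \<noteq> 0} \<subseteq> {d0..<d0 + int a}" by (auto simp: gdim_cyc cgd_def)
  then have "finite {j. gdim (cyc d0 a :: 'k grmod) j \<noteq> 0}" by (rule finite_subset) simp
  moreover have "\<forall>j. xmat (cyc d0 a :: 'k grmod) j \<in> carrier_mat (gdim (cyc d0 a :: 'k grmod) (j + 1)) (gdim (cyc d0 a :: 'k grmod) j)"
    by (simp add: gdim_cyc xmat_cyc_carrier)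
  moreover have "\<forall>j. xpow (cyc d0 a :: 'k grmod) j n = 0\<^sub>m (gdim (cyc d0 a :: 'k grmod) (j + int n)) (gdim (cyc d0 a :: 'k grmod) j)"
    using assms by (auto simp: xpow_cyc gdim_cyc)
  ultimately show ?thesis by (simp add: fg_graded_module_def)
qed


lemma betti_cyc:
  assumes n2: "n \<ge> 2" and a: "1 \<le> a" "a \<le> n"
  shows "betti n (cyc d0 a :: 'k::field grmod) 0 j = (if j = d0 then 1 else 0)"
    "betti n (cyc d0 a :: 'k grmod) 1 j = (if a < n \<and> j = d0 + int a then 1 else 0)"
    "betti n (cyc d0 a :: 'k grmod) 2 j = (if a < n \<and> j = d0 + int n then 1 else 0)"
proof -
  interpret G: gmod n "cyc d0 a :: 'k grmod" by unfold_locales (use fg_cyc a n2 in auto)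
  have rk: "G.rk r j' = (if d0 \<le> j' \<and> j' + int r < d0 + int a then 1 else 0)" for r j'
    by (simp add: G.rk_def xpow_cyc img_dim_one img_dim_zero)
  have nn: "int (n - 1) = int n - 1" using n2 by simp
  show "betti n (cyc d0 a :: 'k::field grmod) 0 j = (if j = d0 then 1 else 0)"
    using G.betti_0[of j] a unfolding rk gdim_cyc cgd_def by auto
  show "betti n (cyc d0 a :: 'k grmod) 1 j = (if a < n \<and> j = d0 + int a then 1 else 0)"
    using G.betti_1[of j] a n2 unfolding rk gdim_cyc cgd_def nn by auto
  show "betti n (cyc d0 a :: 'k grmod) 2 j = (if a < n \<and> j = d0 + int n then 1 else 0)"
    using G.betti_2[of j] a n2 unfolding rk gdim_cyc cgd_def nn by auto
qed

lemma vmat_eq: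
  fixes f g :: vmat
  assumes "\<And>j. f 0 j = g 0 j" "\<And>j. f 1 j = g 1 j" "\<And>j. f 2 j = g 2 j"
    and pf: "\<And>i k. i \<ge> 1 \<Longrightarrow> f (i+2) (k + int n) = f i k"
    and pg: "\<And>i k. i \<ge> 1 \<Longrightarrow> g (i+2) (k + int n) = g i k"
  shows "f = g"
proof -
  have "f i k = g i k" for i k
  proof (induction i arbitrary: k rule: less_induct)
    case (less i)
    show ?case
    proof (cases "i \<le> 2")
      case True
      then have "i = 0 \<or> i = 1 \<or> i = 2" by auto
      then show ?thesis using assms(1-3) by auto
    next
      case False
      have e: "i - 2 + 2 = i" using False by simp
      have "f i k = f (i - 2) (k - int n)" using pf[of "i - 2" "k - int n"] False unfolding e by simp
      moreover have "g i k = g (i - 2) (k - int n)" using pg[of "i - 2" "k - int n"] False unfolding e by simp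
      ultimately show ?thesis using less.IH[of "i - 2"] False by simp
    qed
  qed
  then show ?thesis by (intro ext)
qed

lemma pi_betti:
  assumes d: "degree_seq n d" and n2: "n \<ge> 2"
  shows "\<exists>M :: 'k::field grmod. fg_graded_module n M \<and> betti n M = pi_seq d"
  using d unfolding degree_seq_def
proof (elim disjE exE conjE)
  fix d0 assume d0: "d 0 = Some d0" and dn: "\<forall>i\<ge>1. d i = None"
  let ?M = "cyc d0 n :: 'k grmod"
  have "betti n ?M = pi_seq d"
  proof (rule vmat_eq[where n=n])
    show "betti n ?M 0 j = pi_seq d 0 j" for j using betti_cyc[OF n2, of n d0 j] n2 d0 by (auto simp: pi_seq_def)
    show "betti n ?M 1 j = pi_seq d 1 j" for j using betti_cyc[OF n2, of n d0 j] n2 dn by (auto simp: pi_seq_def)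
    show "betti n ?M 2 j = pi_seq d 2 j" for j using betti_cyc[OF n2, of n d0 j] n2 dn by (auto simp: pi_seq_def)
    show "betti n ?M (i+2) (k + int n) = betti n ?M i k" if "i \<ge> 1" for i k by (rule betti_periodic[OF that])
    show "pi_seq d (i+2) (k + int n) = pi_seq d i k" if "i \<ge> 1" for i k using dn that by (simp add: pi_seq_def)
  qed
  then show ?thesis using fg_cyc[of n n d0] by blast
next
  fix e assume de: "\<forall>i. d i = Some (e i)" and e01: "e 0 < e 1" "e 1 < e 0 + int n"
    and ep: "\<forall>i. e (i + 2) - e i = int n"
  define a where "a = nat (e 1 - e 0)"
  have a: "1 \<le> a" "a < n" "int a = e 1 - e 0" using e01 by (auto simp: a_def)
  let ?M = "cyc (e 0) a :: 'k grmod"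
  have p: "pi_seq d i j = (if e i = j then 1 else 0)" for i j using de by (simp add: pi_seq_def)
  have e2: "e 2 = e 0 + int n" using ep[rule_format, of 0] by (simp add: eval_nat_numeral)
  have "betti n ?M = pi_seq d"
  proof (rule vmat_eq[where n=n])
    show "betti n ?M 0 j = pi_seq d 0 j" for j using betti_cyc[OF n2, of a "e 0" j] a by (auto simp: p)
    show "betti n ?M 1 j = pi_seq d 1 j" for j using betti_cyc[OF n2, of a "e 0" j] a by (auto simp: p)
    show "betti n ?M 2 j = pi_seq d 2 j" for j using betti_cyc[OF n2, of a "e 0" j] a e2 by (auto simp: p)
    show "betti n ?M (i+2) (k + int n) = betti n ?M i k" if "i \<ge> 1" for i k by (rule betti_periodic[OF that])
    show "pi_seq d (i+2) (k + int n) = pi_seq d i k" for i k using ep[rule_format, of i] by (auto simp: p)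
  qed
  moreover have "fg_graded_module n ?M" using fg_cyc[of a n "e 0"] a by simp
  ultimately show ?thesis by blast
qed

theorem main:
  assumes n2: "n \<ge> 2"
  shows "BQ TYPE('k::field) n = Dcone n \<and> Dcone n = Fcone n"
proof -
  have DF: "Dcone n = Fcone n" using F_sub_D[OF n2] D_sub_F[OF n2] by blast
  have "BQ TYPE('k) n \<subseteq> Fcone n" unfolding BQ_def
  proof (rule pos_sub_Fcone, safe)
    fix M :: "'k grmod" assume "fg_graded_module n M"
    then interpret G: gmod n M by unfold_locales (use n2 in auto)
    show "betti n M \<in> Fcone n" by (rule G.betti_in_F)
  qed
  moreover have "Dcone n \<subseteq> BQ TYPE('k) n" unfolding Dcone_def BQ_def
  proof (rule pos_mono, safe)
    fix d assume "degree_seq n d"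
    then obtain M :: "'k grmod" where "fg_graded_module n M" "betti n M = pi_seq d"
      using pi_betti[OF _ n2] by blast
    then show "\<exists>M. pi_seq d = betti n (M :: 'k grmod) \<and> fg_graded_module n M" by (intro exI[of _ M]) simp
  qed
  ultimately show ?thesis using DF by blast
qed


theorem theorem3p4:
  assumes "n \<ge> 2"
  shows "BQ TYPE('k::field) n = Dcone n \<and> Dcone n = Fcone n"
  by (rule main[OF assms])

end
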